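(* Let $X$ be a transitive subshift whose language $\mathcal L$ is aperiodic and has eventually constant growth with rate $K$. Then there is $N$ such that for every $x\in X$, every $n\ge N$ and every $\mathfrak s\in\{\ell,r\}$ there exists an $\mathfrak s$-special $w\in\mathcal L_n$ with $\mathcal D(w,x)\ge 1/K$.
   Context: A subshift is a nonempty closed $X\subseteq\mathcal A^{\mathbb N}$ ($\mathcal A$ finite) with $SX=X$ for the left shift; transitive: for all nonempty open $U,V$ some $S^n(U)\cap V\ne\emptyset$. $\mathcal L$ = set of finite nonempty words occurring in points of $X$, $\mathcal L_n$ those of length $n$, $p(n)=|\mathcal L_n|$; eventually constant growth with rate $K$: $p(n+1)-p(n)=K$ for all large $n$. Aperiodic: there is no $P$ with $w_i=w_{i+P}$ for all $w\in\mathcal L$, $1\le i\le|w|-P$. $w$ is $\ell$-special if $|\{a:aw\in\mathcal L\}|\ge2$, $r$-special if $|\{b:wb\in\mathcal L\}|\ge 2$. Upper density: for $x\in X$ and $w\in\mathcal L$ with $n=|w|$, let $r(w,x,j)=1$ if $x_{[k,k+n-1]}=w$ for some $k$ with $(j-1)(K+1)n<k\le j(K+1)n$, and $r(w,x,j)=0$ otherwise; $\mathcal D(w,x)=\limsup_{N\to\infty}\frac1N\sum_{j=1}^N r(w,x,j)$. *)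

theory Defs
  imports "HOL-Analysis.Analysis" "HOL-Library.Liminf_Limsup"
begin

text \<open>Points of the full shift are functions nat => 'a (0-based storage);
  the paper's coordinate x_k (k = 1, 2, ...) is stored as x (k - 1).\<close>

definition full_shift_top :: "'a set \<Rightarrow> (nat \<Rightarrow> 'a) topology" where
  "full_shift_top A = product_topology (\<lambda>_. discrete_topology A) UNIV"

definition shift :: "(nat \<Rightarrow> 'a) \<Rightarrow> (nat \<Rightarrow> 'a)" where
  "shift x = (\<lambda>i. x (Suc i))"

definition subshift :: "'a set \<Rightarrow> (nat \<Rightarrow> 'a) set \<Rightarrow> bool" where
  "subshift A X \<longleftrightarrow> finite A \<and> X \<noteq> {} \<and> closedin (full_shift_top A) X \<and> shift ` X = X"

definition transitive_subshift :: "'a set \<Rightarrow> (nat \<Rightarrow> 'a) set \<Rightarrow> bool" where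
  "transitive_subshift A X \<longleftrightarrow> subshift A X \<and>
     (\<forall>U V. openin (subtopology (full_shift_top A) X) U \<and> U \<noteq> {} \<and>
            openin (subtopology (full_shift_top A) X) V \<and> V \<noteq> {} \<longrightarrow>
            (\<exists>n::nat. (shift ^^ n) ` U \<inter> V \<noteq> {}))"

definition factor :: "(nat \<Rightarrow> 'a) \<Rightarrow> nat \<Rightarrow> nat \<Rightarrow> 'a list" where
  "factor x i n = map x [i..<i+n]"

definition lang :: "(nat \<Rightarrow> 'a) set \<Rightarrow> 'a list set" where
  "lang X = {w. w \<noteq> [] \<and> (\<exists>x\<in>X. \<exists>i. w = factor x i (length w))}"

definition lang_n :: "(nat \<Rightarrow> 'a) set \<Rightarrow> nat \<Rightarrow> 'a list set" where
  "lang_n X n = {w \<in> lang X. length w = n}"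

definition complexity :: "(nat \<Rightarrow> 'a) set \<Rightarrow> nat \<Rightarrow> nat" where
  "complexity X n = card (lang_n X n)"

definition eventually_const_growth :: "(nat \<Rightarrow> 'a) set \<Rightarrow> nat \<Rightarrow> bool" where
  "eventually_const_growth X K \<longleftrightarrow>
     (\<exists>n0. \<forall>n\<ge>n0. int (complexity X (Suc n)) - int (complexity X n) = int K)"

definition aperiodic_lang :: "'a list set \<Rightarrow> bool" where
  "aperiodic_lang L \<longleftrightarrow>
     \<not> (\<exists>P::nat. P \<ge> 1 \<and> (\<forall>w\<in>L. \<forall>i. i + P < length w \<longrightarrow> w ! i = w ! (i + P)))"

definition l_special :: "'a list set \<Rightarrow> 'a list \<Rightarrow> bool" where
  "l_special L w \<longleftrightarrow> card {a. a # w \<in> L} \<ge> 2"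

definition r_special :: "'a list set \<Rightarrow> 'a list \<Rightarrow> bool" where
  "r_special L w \<longleftrightarrow> card {b. w @ [b] \<in> L} \<ge> 2"

definition occ_block :: "nat \<Rightarrow> 'a list \<Rightarrow> (nat \<Rightarrow> 'a) \<Rightarrow> nat \<Rightarrow> real" where
  "occ_block K w x j =
     (if \<exists>k. (j - 1) * (K + 1) * length w < k \<and> k \<le> j * (K + 1) * length w \<and>
             factor x (k - 1) (length w) = w then 1 else 0)"

definition upper_density :: "nat \<Rightarrow> 'a list \<Rightarrow> (nat \<Rightarrow> 'a) \<Rightarrow> ereal" where
  "upper_density K w x =
     limsup (\<lambda>N. ereal ((\<Sum>j=1..N. occ_block K w x j) / real N))"

end

theory Submission
  imports Defs
begin


lemma length_factor[simp]: "length (factor x i n) = n"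
  by (simp add: factor_def)

lemma factor_nth: "m < n \<Longrightarrow> factor x i n ! m = x (i+m)"
  by (simp add: factor_def)

lemma factor_eq_iff: "factor x i n = factor y j n \<longleftrightarrow> (\<forall>m<n. x(i+m) = y(j+m))"
  by (simp add: list_eq_iff_nth_eq factor_nth)

lemma factor_Suc_right: "factor x i (Suc n) = factor x i n @ [x (i+n)]"
  by (simp add: factor_def)

lemma factor_Suc_left: "factor x i (Suc n) = x i # factor x (Suc i) n"
  by (simp add: factor_def upt_rec)

lemma funpow_shift: "(shift ^^ m) x = (\<lambda>t. x (t+m))"
  by (induction m arbitrary: x) (auto simp: shift_def)

lemma factor_funpow_shift: "factor ((shift ^^ m) x) s l = factor x (s+m) l"
  by (simp add: funpow_shift factor_eq_iff algebra_simps)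

lemma shiftn_image: "shift ` X = X \<Longrightarrow> (shift ^^ m) ` X = X"
proof (induction m)
  case 0 then show ?case by simp
next
  case (Suc m)
  have "(shift ^^ Suc m) ` X = shift ` ((shift ^^ m) ` X)"
    by (simp add: image_comp)
  then show ?case using Suc by simp
qed

lemma subshift_in_A: assumes "subshift A X" "x \<in> X" shows "x i \<in> A"
proof -
  have "X \<subseteq> topspace (full_shift_top A)"
    using assms(1) closedin_subset unfolding subshift_def by blast
  then show ?thesis using assms(2) by (auto simp: full_shift_top_def PiE_iff)
qed

lemma factor_in_lang: "x \<in> X \<Longrightarrow> n \<ge> 1 \<Longrightarrow> factor x i n \<in> lang X"
proof -
  assume a: "x \<in> X" "n \<ge> 1"
  have "factor x i n \<noteq> []" using a(2) by (metis length_factor list.size(3) not_one_le_zero)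
  then show ?thesis using a(1) unfolding lang_def by auto
qed

lemma factor_in_lang_n: "x \<in> X \<Longrightarrow> n \<ge> 1 \<Longrightarrow> factor x i n \<in> lang_n X n"
  using factor_in_lang unfolding lang_n_def by auto

lemma lang_set: assumes "subshift A X" "w \<in> lang X" shows "set w \<subseteq> A"
proof -
  from assms(2) obtain x i where x: "x \<in> X" "w = factor x i (length w)" unfolding lang_def by auto
  show ?thesis using subshift_in_A[OF assms(1) x(1)] x(2) by (metis factor_def ex_map_conv subsetI)
qed

lemma lang_n_finite: assumes "subshift A X" shows "finite (lang_n X n)"
proof -
  have "finite A" using assms subshift_def by auto
  have "lang_n X n \<subseteq> {w. set w \<subseteq> A \<and> length w = n}"
    using lang_set[OF assms] unfolding lang_n_def by auto
  then show ?thesis using finite_lists_length_eq[OF \<open>finite A\<close>] finite_subset by blast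
qed

lemma cyl_open:
  assumes "subshift A X"
  shows "openin (subtopology (full_shift_top A) X) {z\<in>X. factor z s l = u}"
proof (cases "length u = l")
  case False
  then have "{z\<in>X. factor z s l = u} = {}" by auto
  then show ?thesis by (metis openin_empty)
next
  case True
  define C where "C l = {z \<in> topspace (full_shift_top A). \<forall>m<l. z(s+m) = u!m}" for l
  have op: "openin (full_shift_top A) (C l)" for l
  proof (induction l)
    case 0 then show ?case by (simp add: C_def)
  next
    case (Suc l)
    have "openin (full_shift_top A) {z \<in> topspace (full_shift_top A). z (s+l) \<in> {u!l} \<inter> A}"
      unfolding full_shift_top_def
      by (rule openin_continuous_map_preimage[OF continuous_map_product_projection]) auto
    moreover have "C (Suc l) = C l \<inter> {z \<in> topspace (full_shift_top A). z (s+l) \<in> {u!l} \<inter> A}"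
      unfolding C_def by (auto simp: full_shift_top_def PiE_iff less_Suc_eq)
    ultimately show ?case using Suc by auto
  qed
  have X: "X \<subseteq> topspace (full_shift_top A)"
    using assms(1) closedin_subset unfolding subshift_def by blast
  have "{z\<in>X. factor z s l = u} = X \<inter> C l"
    using X True by (auto simp: C_def list_eq_iff_nth_eq factor_nth)
  then show ?thesis using openin_subtopology_Int2[OF op] by simp
qed



lemma unique_rext:
  assumes "subshift A X" "\<not> r_special (lang X) w" "w @ [p] \<in> lang X" "w @ [q] \<in> lang X"
  shows "p = q"
proof (rule ccontr)
  assume "p \<noteq> q"
  have "finite A" using assms(1) subshift_def by auto
  have "{b. w @ [b] \<in> lang X} \<subseteq> A" by (auto dest!: lang_set[OF assms(1)])
  then have fin: "finite {b. w @ [b] \<in> lang X}" using \<open>finite A\<close> finite_subset by blast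
  have "{p,q} \<subseteq> {b. w @ [b] \<in> lang X}" using assms by auto
  then have "card {p,q} \<le> card {b. w @ [b] \<in> lang X}" using card_mono[OF fin] by blast
  then show False using \<open>p \<noteq> q\<close> assms(2) unfolding r_special_def by auto
qed

lemma unique_lext:
  assumes "subshift A X" "\<not> l_special (lang X) w" "p # w \<in> lang X" "q # w \<in> lang X"
  shows "p = q"
proof (rule ccontr)
  assume "p \<noteq> q"
  have "finite A" using assms(1) subshift_def by auto
  have "{b. b # w \<in> lang X} \<subseteq> A" by (auto dest!: lang_set[OF assms(1)])
  then have fin: "finite {b. b # w \<in> lang X}" using \<open>finite A\<close> finite_subset by blast
  have "{p,q} \<subseteq> {b. b # w \<in> lang X}" using assms by auto
  then have "card {p,q} \<le> card {b. b # w \<in> lang X}" using card_mono[OF fin] by blast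
  then show False using \<open>p \<noteq> q\<close> assms(2) unfolding l_special_def by auto
qed

lemma pigeon_window:
  assumes "subshift A X" "x \<in> X" "n \<ge> 1" "card (lang_n X n) < L"
  obtains a b where "i \<le> a" "a < b" "b < i + L" "factor x a n = factor x b n"
proof -
  let ?f = "\<lambda>t. factor x t n"
  have "?f ` {i..<i+L} \<subseteq> lang_n X n" using factor_in_lang_n[OF assms(2,3)] by auto
  then have "card (?f ` {i..<i+L}) \<le> card (lang_n X n)"
    using card_mono[OF lang_n_finite[OF assms(1)]] by blast
  then have "card (?f ` {i..<i+L}) < card {i..<i+L}" using assms(4) by simp
  then have "\<not> inj_on ?f {i..<i+L}" using pigeonhole by blast
  then obtain a b where ab: "a \<in> {i..<i+L}" "b \<in> {i..<i+L}" "a \<noteq> b" "?f a = ?f b"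
    unfolding inj_on_def by blast
  show ?thesis
  proof (cases "a < b")
    case True then show ?thesis using that ab by auto
  next
    case False then show ?thesis using that[of b a] ab by auto
  qed
qed

lemma aperiodic_contra:
  assumes "aperiodic_lang (lang X)" "d \<ge> 1"
    and "\<And>v q. v \<in> lang X \<Longrightarrow> q + d < length v \<Longrightarrow> v ! q = v ! (q + d)"
  shows False
  using assms unfolding aperiodic_lang_def by blast

lemma right_window:
  assumes ts: "transitive_subshift A X" and ap: "aperiodic_lang (lang X)"
    and x: "x \<in> X" and n: "n \<ge> 1" and card: "card (lang_n X n) < L"
    and ns: "\<forall>t\<in>{i..<i+L}. \<not> r_special (lang X) (factor x t n)"
  shows False
proof -
  have ss: "subshift A X" using ts transitive_subshift_def by auto
  obtain a b where ab: "i \<le> a" "a < b" "b < i + L" "factor x a n = factor x b n"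
    using pigeon_window[OF ss x n card] by blast
  define d where "d = b - a"
  have d1: "d \<ge> 1" using ab d_def by auto
  have per: "y (k + d) = y k" if y: "y \<in> X" "factor y 0 n = factor x a n" for y k
  proof -
    have det: "factor y k n = factor x (a + k mod d) n" for k
    proof (induction k)
      case 0 then show ?case using y by simp
    next
      case (Suc k)
      define c where "c = a + k mod d"
      have "k mod d < d" using d1 by simp
      moreover have "a + d = b" using ab d_def by simp
      ultimately have "c < b" unfolding c_def by linarith
      then have cw: "c \<in> {i..<i+L}" "c < b" using ab c_def by auto
      have eqk: "factor y k n = factor x c n" using Suc c_def by simp
      have l1: "factor x c n @ [y (k+n)] \<in> lang X"
        using factor_in_lang[OF y(1), of "Suc n" k] eqk by (simp add: factor_Suc_right)
      have l2: "factor x c n @ [x (c+n)] \<in> lang X"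
        using factor_in_lang[OF x, of "Suc n" c] by (simp add: factor_Suc_right)
      have yx: "y (k+n) = x (c+n)"
        using unique_rext[OF ss _ l1 l2] ns cw by blast
      have step: "factor y (Suc k) n = factor x (Suc c) n"
        unfolding factor_eq_iff
      proof (intro allI impI)
        fix m assume "m < n"
        show "y (Suc k + m) = x (Suc c + m)"
        proof (cases "Suc m < n")
          case True then show ?thesis using eqk unfolding factor_eq_iff by (metis add_Suc add_Suc_right)
        next
          case False then have "Suc m = n" using \<open>m < n\<close> by auto
          then show ?thesis using yx by (metis add_Suc add_Suc_right)
        qed
      qed
      show ?case
      proof (cases "Suc (k mod d) = d")
        case True
        then have "Suc c = b" using c_def d_def ab by auto
        moreover have "Suc k mod d = 0" using True mod_Suc by simp
        ultimately show ?thesis using step ab(4) by simp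
      next
        case False
        then have "Suc k mod d = Suc (k mod d)" using mod_Suc by simp
        then show ?thesis using step c_def by simp
      qed
    qed
    have "y j = x (a + j mod d)" for j using det[of j] n unfolding factor_eq_iff
      by (metis add.right_neutral One_nat_def Suc_le_eq)
    then show ?thesis by simp
  qed
  have "v ! q = v ! (q + d)" if v: "v \<in> lang X" "q + d < length v" for v q
  proof -
    let ?T = "subtopology (full_shift_top A) X"
    define U where "U = {z\<in>X. factor z 0 n = factor x a n}"
    define V where "V = {z\<in>X. factor z 0 (length v) = v}"
    have "(shift ^^ a) x \<in> U" unfolding U_def using shiftn_image[of X a] ss x
      by (auto simp: subshift_def factor_funpow_shift)
    moreover obtain z j where z: "z \<in> X" "v = factor z j (length v)" using v unfolding lang_def by auto
    have "(shift ^^ j) z \<in> V" unfolding V_def using shiftn_image[of X j] ss z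
      by (auto simp: subshift_def factor_funpow_shift)
    ultimately have ne: "U \<noteq> {}" "V \<noteq> {}" by auto
    have "openin ?T U" "openin ?T V" unfolding U_def V_def using cyl_open[OF ss] by auto
    then obtain m where "(shift ^^ m) ` U \<inter> V \<noteq> {}"
      using ts ne unfolding transitive_subshift_def by blast
    then obtain y where y: "y \<in> U" "(shift ^^ m) y \<in> V" by blast
    have fy: "factor y m (length v) = v" using y(2) unfolding V_def by (simp add: factor_funpow_shift)
    have pery: "y (t + d) = y t" for t using per[of y t] y(1) U_def by auto
    have "v ! q = y (m + q)" using fy v(2) factor_nth[of q "length v" y m] by simp
    also have "\<dots> = y (m + (q + d))" using pery[of "m+q"] by (simp add: add.assoc)
    also have "\<dots> = v ! (q + d)" using fy v(2) factor_nth[of "q+d" "length v" y m] by simp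
    finally show ?thesis .
  qed
  then show False using aperiodic_contra[OF ap d1] by blast
qed


lemma left_window:
  assumes ts: "transitive_subshift A X" and ap: "aperiodic_lang (lang X)"
    and x: "x \<in> X" and n: "n \<ge> 1" and card: "card (lang_n X n) < L"
    and ns: "\<forall>t\<in>{i..<i+L}. \<not> l_special (lang X) (factor x t n)"
  shows False
proof -
  have ss: "subshift A X" using ts transitive_subshift_def by auto
  obtain a b where ab: "i \<le> a" "a < b" "b < i + L" "factor x a n = factor x b n"
    using pigeon_window[OF ss x n card] by blast
  define d where "d = b - a"
  have d1: "d \<ge> 1" using ab d_def by auto
  have bd: "a + d = b" using ab d_def by simp
  have per: "y t = y (t + d)" if y: "y \<in> X" "factor y s n = factor x b n" "t + d \<le> s" for y s t
  proof -
    have det: "k \<le> s \<Longrightarrow> factor y (s - k) n = factor x (b - k mod d) n" for k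
    proof (induction k)
      case 0 then show ?case using y by simp
    next
      case (Suc k)
      define c where "c = b - k mod d"
      have "k mod d < d" using d1 by simp
      then have "a < c" "c \<le> b" unfolding c_def using bd by linarith+
      then have cw: "c \<in> {i..<i+L}" "c \<ge> 1" using ab by auto
      define t where "t = s - k"
      have t1: "t \<ge> 1" using Suc.prems t_def by simp
      have eqk: "factor y t n = factor x c n" using Suc c_def t_def by simp
      have l1: "y (t-1) # factor x c n \<in> lang X"
        using factor_in_lang[OF y(1), of "Suc n" "t-1"] eqk t1 by (simp add: factor_Suc_left)
      have l2: "x (c-1) # factor x c n \<in> lang X"
        using factor_in_lang[OF x, of "Suc n" "c-1"] cw by (simp add: factor_Suc_left)
      have yx: "y (t-1) = x (c-1)"
        using unique_lext[OF ss _ l1 l2] ns cw by blast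
      have step: "factor y (t-1) n = factor x (c-1) n"
        unfolding factor_eq_iff
      proof (intro allI impI)
        fix m assume "m < n"
        show "y (t - 1 + m) = x (c - 1 + m)"
        proof (cases m)
          case 0 then show ?thesis using yx by simp
        next
          case (Suc m')
          then have "m' < n" using \<open>m < n\<close> by simp
          then have "y (t + m') = x (c + m')" using eqk unfolding factor_eq_iff by blast
          then show ?thesis using Suc t1 cw by simp
        qed
      qed
      have st: "s - Suc k = t - 1" using t_def by simp
      show ?case
      proof (cases "Suc (k mod d) = d")
        case True
        then have "c - 1 = a" using c_def bd by auto
        moreover have "Suc k mod d = 0" using True mod_Suc by simp
        ultimately show ?thesis using step ab(4) st by simp
      next
        case False
        then have "Suc k mod d = Suc (k mod d)" using mod_Suc by simp
        then show ?thesis using step c_def st by simp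
      qed
    qed
    have yv: "y j = x (b - (s - j) mod d)" if "j \<le> s" for j
    proof -
      have "factor y (s - (s - j)) n = factor x (b - (s - j) mod d) n" using det[of "s-j"] by simp
      then have "factor y j n = factor x (b - (s - j) mod d) n" using that by simp
      then show ?thesis using n unfolding factor_eq_iff by (metis add.right_neutral One_nat_def Suc_le_eq)
    qed
    have "(s - t) mod d = (s - (t + d)) mod d"
      using y(3) by (metis diff_diff_left le_mod_geq add_le_imp_le_diff le_add2 add.commute)
    then show ?thesis using yv[of t] yv[of "t+d"] y(3) by simp
  qed
  have "v ! q = v ! (q + d)" if v: "v \<in> lang X" "q + d < length v" for v q
  proof -
    let ?T = "subtopology (full_shift_top A) X"
    define l where "l = length v"
    define U where "U = {z\<in>X. factor z 0 l = v}"
    define V where "V = {z\<in>X. factor z l n = factor x b n}"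
    obtain z j where z: "z \<in> X" "v = factor z j l" using v unfolding lang_def l_def by auto
    have "(shift ^^ j) z \<in> U" unfolding U_def using shiftn_image[of X j] ss z
      by (auto simp: subshift_def factor_funpow_shift)
    moreover have "(shift ^^ b) x \<in> X" using shiftn_image[of X b] ss x by (auto simp: subshift_def)
    then obtain z' where z': "z' \<in> X" "(shift ^^ l) z' = (shift ^^ b) x"
      using shiftn_image[of X l] ss by (metis imageE subshift_def)
    have "factor z' l n = factor x b n"
      using arg_cong[OF z'(2), of "\<lambda>y. factor y 0 n"] by (simp add: factor_funpow_shift)
    then have "z' \<in> V" unfolding V_def using z' by simp
    ultimately have ne: "U \<noteq> {}" "V \<noteq> {}" by auto
    have "openin ?T U" "openin ?T V" unfolding U_def V_def using cyl_open[OF ss] by auto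
    then obtain m where "(shift ^^ m) ` U \<inter> V \<noteq> {}"
      using ts ne unfolding transitive_subshift_def by blast
    then obtain y where y: "y \<in> U" "(shift ^^ m) y \<in> V" by blast
    have fy: "factor y 0 l = v" using y(1) unfolding U_def by simp
    have fb: "factor y (l + m) n = factor x b n" using y(2) unfolding V_def by (simp add: factor_funpow_shift)
    have yX: "y \<in> X" using y(1) U_def by simp
    have pery: "y q = y (q + d)" using per[OF yX fb] v(2) l_def by simp
    have "v ! q = y q" using fy v(2) factor_nth[of q l y 0] l_def by simp
    also have "\<dots> = y (q + d)" using pery .
    also have "\<dots> = v ! (q + d)" using fy v(2) factor_nth[of "q+d" l y 0] l_def by simp
    finally show ?thesis .
  qed
  then show False using aperiodic_contra[OF ap d1] by blast
qed



lemma rspecial_count: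
  assumes ss: "subshift A X" and n: "n \<ge> 1"
  shows "card {w \<in> lang_n X n. r_special (lang X) w} + complexity X n \<le> complexity X (Suc n)"
proof -
  define E where "E w = {b. w @ [b] \<in> lang X}" for w
  have finA: "finite A" using ss subshift_def by auto
  have finE: "finite (E w)" for w
  proof -
    have "E w \<subseteq> A" unfolding E_def by (auto dest!: lang_set[OF ss])
    then show ?thesis using finA finite_subset by blast
  qed
  have neE: "card (E w) \<ge> 1" if "w \<in> lang_n X n" for w
  proof -
    from that obtain x i where x: "x \<in> X" "w = factor x i n" unfolding lang_n_def lang_def by auto
    have "x (i+n) \<in> E w" unfolding E_def using factor_in_lang[OF x(1), of "Suc n" i] x(2)
      by (simp add: factor_Suc_right)
    then show ?thesis using finE[of w] by (metis One_nat_def Suc_leI card_gt_0_iff empty_iff)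
  qed
  have eq: "lang_n X (Suc n) = (\<Union>w\<in>lang_n X n. (\<lambda>b. w @ [b]) ` E w)"
  proof
    show "lang_n X (Suc n) \<subseteq> (\<Union>w\<in>lang_n X n. (\<lambda>b. w @ [b]) ` E w)"
    proof
      fix u assume "u \<in> lang_n X (Suc n)"
      then obtain x i where x: "x \<in> X" "u = factor x i (Suc n)" unfolding lang_n_def lang_def by auto
      then have "factor x i n \<in> lang_n X n" using factor_in_lang_n[OF x(1) n] by simp
      moreover have "x (i+n) \<in> E (factor x i n)" unfolding E_def
        using factor_in_lang[OF x(1), of "Suc n" i] by (simp add: factor_Suc_right)
      ultimately show "u \<in> (\<Union>w\<in>lang_n X n. (\<lambda>b. w @ [b]) ` E w)"
        using x(2) by (auto simp: factor_Suc_right)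
    qed
    show "(\<Union>w\<in>lang_n X n. (\<lambda>b. w @ [b]) ` E w) \<subseteq> lang_n X (Suc n)"
      unfolding E_def lang_n_def by auto
  qed
  have "complexity X (Suc n) = (\<Sum>w\<in>lang_n X n. card ((\<lambda>b. w @ [b]) ` E w))"
    unfolding complexity_def eq
    by (rule card_UN_disjoint) (auto simp: lang_n_finite[OF ss] finE)
  also have "\<dots> = (\<Sum>w\<in>lang_n X n. card (E w))"
    by (rule sum.cong) (auto simp: card_image inj_on_def)
  also have "\<dots> \<ge> (\<Sum>w\<in>lang_n X n. 1 + (if r_special (lang X) w then 1 else 0))"
    by (rule sum_mono) (use neE in \<open>auto simp: r_special_def E_def\<close>)
  finally have "complexity X (Suc n) \<ge> (\<Sum>w\<in>lang_n X n. 1 + (if r_special (lang X) w then 1 else 0))" .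
  moreover have "(\<Sum>w\<in>lang_n X n. 1 + (if r_special (lang X) w then 1 else 0))
      = complexity X n + card {w \<in> lang_n X n. r_special (lang X) w}"
    unfolding complexity_def sum.distrib
    using sum.inter_filter[OF lang_n_finite[OF ss], where g="\<lambda>_. 1::nat" and P="r_special (lang X)"] by simp
  ultimately show ?thesis by simp
qed

lemma lspecial_count:
  assumes ss: "subshift A X" and n: "n \<ge> 1"
  shows "card {w \<in> lang_n X n. l_special (lang X) w} + complexity X n \<le> complexity X (Suc n)"
proof -
  define E where "E w = {b. b # w \<in> lang X}" for w
  have finA: "finite A" using ss subshift_def by auto
  have finE: "finite (E w)" for w
  proof -
    have "E w \<subseteq> A" unfolding E_def by (auto dest!: lang_set[OF ss])
    then show ?thesis using finA finite_subset by blast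
  qed
  have neE: "card (E w) \<ge> 1" if "w \<in> lang_n X n" for w
  proof -
    from that obtain x i where x: "x \<in> X" "w = factor x i n" unfolding lang_n_def lang_def by auto
    obtain z where z: "z \<in> X" "shift z = x" using ss x(1) unfolding subshift_def by (metis imageE)
    have "w = factor z (Suc i) n" using x(2) z(2) by (auto simp: factor_eq_iff shift_def)
    then have "z i \<in> E w" unfolding E_def using factor_in_lang[OF z(1), of "Suc n" i]
      by (simp add: factor_Suc_left)
    then show ?thesis using finE[of w] by (metis One_nat_def Suc_leI card_gt_0_iff empty_iff)
  qed
  have eq: "lang_n X (Suc n) = (\<Union>w\<in>lang_n X n. (\<lambda>b. b # w) ` E w)"
  proof
    show "lang_n X (Suc n) \<subseteq> (\<Union>w\<in>lang_n X n. (\<lambda>b. b # w) ` E w)"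
    proof
      fix u assume "u \<in> lang_n X (Suc n)"
      then obtain x i where x: "x \<in> X" "u = factor x i (Suc n)" unfolding lang_n_def lang_def by auto
      then have "factor x (Suc i) n \<in> lang_n X n" using factor_in_lang_n[OF x(1) n] by simp
      moreover have "x i \<in> E (factor x (Suc i) n)" unfolding E_def
        using factor_in_lang[OF x(1), of "Suc n" i] by (simp add: factor_Suc_left)
      ultimately show "u \<in> (\<Union>w\<in>lang_n X n. (\<lambda>b. b # w) ` E w)"
        using x(2) by (auto simp: factor_Suc_left)
    qed
    show "(\<Union>w\<in>lang_n X n. (\<lambda>b. b # w) ` E w) \<subseteq> lang_n X (Suc n)"
      unfolding E_def lang_n_def by auto
  qed
  have "complexity X (Suc n) = (\<Sum>w\<in>lang_n X n. card ((\<lambda>b. b # w) ` E w))"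
    unfolding complexity_def eq
    by (rule card_UN_disjoint) (auto simp: lang_n_finite[OF ss] finE)
  also have "\<dots> = (\<Sum>w\<in>lang_n X n. card (E w))"
    by (rule sum.cong) (auto simp: card_image inj_on_def)
  also have "\<dots> \<ge> (\<Sum>w\<in>lang_n X n. 1 + (if l_special (lang X) w then 1 else 0))"
    by (rule sum_mono) (use neE in \<open>auto simp: l_special_def E_def\<close>)
  finally have "complexity X (Suc n) \<ge> (\<Sum>w\<in>lang_n X n. 1 + (if l_special (lang X) w then 1 else 0))" .
  moreover have "(\<Sum>w\<in>lang_n X n. 1 + (if l_special (lang X) w then 1 else 0))
      = complexity X n + card {w \<in> lang_n X n. l_special (lang X) w}"
    unfolding complexity_def sum.distrib
    using sum.inter_filter[OF lang_n_finite[OF ss], where g="\<lambda>_. 1::nat" and P="l_special (lang X)"] by simp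
  ultimately show ?thesis by simp
qed

lemma density_pigeon:
  fixes f :: "'w \<Rightarrow> nat \<Rightarrow> real"
  assumes fin: "finite S" and cS: "card S \<le> K" and nn: "\<And>w j. 0 \<le> f w j"
    and hit: "\<And>j. j \<ge> 1 \<Longrightarrow> \<exists>w\<in>S. f w j \<ge> 1"
  shows "\<exists>w\<in>S. limsup (\<lambda>N. ereal ((\<Sum>j=1..N. f w j) / real N)) \<ge> ereal (1 / real K)"
proof (rule ccontr)
  assume "\<not> ?thesis"
  then have "\<forall>w\<in>S. limsup (\<lambda>N. ereal ((\<Sum>j=1..N. f w j) / real N)) < ereal (1 / real K)"
    by auto
  then have "\<forall>w\<in>S. eventually (\<lambda>N. ereal ((\<Sum>j=1..N. f w j) / real N) < ereal (1 / real K)) sequentially"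
    by (intro ballI Limsup_lessD) auto
  then have "eventually (\<lambda>N. \<forall>w\<in>S. ereal ((\<Sum>j=1..N. f w j) / real N) < ereal (1 / real K)) sequentially"
    by (rule eventually_ball_finite[OF fin])
  moreover have "eventually (\<lambda>N. N \<ge> 1) sequentially" by (rule eventually_ge_at_top)
  ultimately have "eventually (\<lambda>N. N \<ge> 1 \<and> (\<forall>w\<in>S. ((\<Sum>j=1..N. f w j) / real N) < 1 / real K)) sequentially"
    by eventually_elim auto
  then obtain N where N: "N \<ge> 1" "\<forall>w\<in>S. (\<Sum>j=1..N. f w j) / real N < 1 / real K"
    using eventually_sequentially by auto
  obtain w0 where w0: "w0 \<in> S" using hit[of 1] by auto
  then have "card S > 0" using fin card_gt_0_iff by blast
  then have K1: "real K \<ge> 1" using cS by linarith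
  have "(\<Sum>w\<in>S. (\<Sum>j=1..N. f w j) / real N) < (\<Sum>w\<in>S. 1 / real K)"
    by (rule sum_strict_mono[OF fin]) (use w0 N(2) in auto)
  also have "\<dots> = real (card S) / real K" by simp
  also have "\<dots> \<le> 1" using cS K1 by (simp add: divide_le_eq_1)
  finally have lt: "(\<Sum>w\<in>S. (\<Sum>j=1..N. f w j) / real N) < 1" .
  have "\<forall>j\<in>{1..N}. (\<Sum>w\<in>S. f w j) \<ge> 1"
  proof
    fix j assume "j \<in> {1..N}"
    then have "j \<ge> 1" by simp
    then obtain w where w: "w \<in> S" "f w j \<ge> 1" using hit by blast
    have "f w j \<le> (\<Sum>w\<in>S. f w j)" by (rule member_le_sum[OF w(1)]) (use nn fin in auto)
    then show "(\<Sum>w\<in>S. f w j) \<ge> 1" using w by simp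
  qed
  then have "(\<Sum>j=1..N. \<Sum>w\<in>S. f w j) \<ge> (\<Sum>j=1..N. 1)" by (intro sum_mono) auto
  then have "(\<Sum>j=1..N. \<Sum>w\<in>S. f w j) \<ge> real N" by simp
  moreover have "(\<Sum>w\<in>S. (\<Sum>j=1..N. f w j) / real N) = (\<Sum>j=1..N. \<Sum>w\<in>S. f w j) / real N"
    by (simp only: sum_divide_distrib[symmetric], subst sum.swap, rule refl)
  ultimately have "(\<Sum>w\<in>S. (\<Sum>j=1..N. f w j) / real N) \<ge> 1" using N(1) by simp
  then show False using lt by simp
qed



lemma occ_block_hit:
  assumes "j \<ge> 1" "(j-1)*((K+1)*n) \<le> t" "t < (j-1)*((K+1)*n) + (K+1)*n"
  shows "occ_block K (factor x t n) x j = 1"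
proof -
  have e: "(j - 1) * (K + 1) * length (factor x t n) = (j-1)*((K+1)*n)" by (simp only: length_factor mult.assoc)
  have "(j - 1) * (K + 1) * length (factor x t n) < Suc t" using assms(2) unfolding e by linarith
  moreover have "Suc t \<le> j * (K + 1) * length (factor x t n)"
  proof -
    have "j * ((K+1)*n) = (j-1)*((K+1)*n) + (K+1)*n" using assms(1)
      by (metis Suc_diff_1 less_le_trans mult_Suc zero_less_one add.commute)
    moreover have "j * (K + 1) * length (factor x t n) = j * ((K+1)*n)" by (simp only: length_factor mult.assoc)
    ultimately show ?thesis using assms(3) by linarith
  qed
  ultimately show ?thesis unfolding occ_block_def by (intro if_P exI[of _ "Suc t"]) auto
qed

lemma occ_block_nn: "0 \<le> occ_block K w x j"
  by (simp add: occ_block_def)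

theorem mainTheorem9:
  fixes A :: "'a set" and X :: "(nat \<Rightarrow> 'a) set" and K :: nat
  assumes "transitive_subshift A X"
    and "aperiodic_lang (lang X)"
    and "eventually_const_growth X K"
  shows "\<exists>N. \<forall>x\<in>X. \<forall>n\<ge>N.
           (\<exists>w\<in>lang_n X n. l_special (lang X) w \<and> upper_density K w x \<ge> ereal (1 / real K)) \<and>
           (\<exists>w\<in>lang_n X n. r_special (lang X) w \<and> upper_density K w x \<ge> ereal (1 / real K))"
proof -
  have ss: "subshift A X" using assms(1) transitive_subshift_def by auto
  obtain n0 where n0: "\<forall>n\<ge>n0. int (complexity X (Suc n)) - int (complexity X n) = int K"
    using assms(3) unfolding eventually_const_growth_def by blast
  have grow: "complexity X (Suc n) = complexity X n + K" if "n \<ge> n0" for n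
    using n0 that by fastforce
  have bound: "complexity X n \<le> complexity X n0 + K * n" if "n \<ge> n0" for n
    using that
  proof (induction n rule: dec_induct)
    case base then show ?case by simp
  next
    case (step m) then show ?case using grow[of m] by simp
  qed
  define N where "N = max n0 (Suc (complexity X n0))"
  have props: "n \<ge> 1" "n \<ge> n0" "complexity X n < (K+1)*n" if "n \<ge> N" for n
  proof -
    show "n \<ge> 1" "n \<ge> n0" using that N_def by auto
    have "complexity X n \<le> complexity X n0 + K * n" using bound \<open>n \<ge> n0\<close> by blast
    moreover have "complexity X n0 < n" using that N_def by auto
    ultimately show "complexity X n < (K+1)*n" by simp
  qed
  have "(\<exists>w\<in>lang_n X n. l_special (lang X) w \<and> upper_density K w x \<ge> ereal (1 / real K)) \<and>
        (\<exists>w\<in>lang_n X n. r_special (lang X) w \<and> upper_density K w x \<ge> ereal (1 / real K))"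
    if x: "x \<in> X" and nN: "n \<ge> N" for x n
  proof
    note p = props[OF nN]
    let ?L = "(K+1)*n"
    have crd: "card (lang_n X n) < ?L" using p(3) unfolding complexity_def .
    show "\<exists>w\<in>lang_n X n. l_special (lang X) w \<and> upper_density K w x \<ge> ereal (1 / real K)"
    proof -
      define S where "S = {w \<in> lang_n X n. l_special (lang X) w}"
      have fin: "finite S" unfolding S_def using lang_n_finite[OF ss] by simp
      have cS: "card S \<le> K" using lspecial_count[OF ss p(1)] grow[OF p(2)] unfolding S_def complexity_def
        by simp
      have hit: "\<exists>w\<in>S. occ_block K w x j \<ge> 1" if "j \<ge> 1" for j
      proof -
        have "\<exists>t\<in>{(j-1)*?L..<(j-1)*?L + ?L}. l_special (lang X) (factor x t n)"
          using left_window[OF assms(1,2) x p(1) crd, of "(j-1)*?L"] by blast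
        then obtain t where t: "t \<in> {(j-1)*?L..<(j-1)*?L + ?L}" "l_special (lang X) (factor x t n)" by blast
        have "factor x t n \<in> S" unfolding S_def using t(2) factor_in_lang_n[OF x p(1)] by simp
        moreover have "occ_block K (factor x t n) x j = 1" using occ_block_hit[OF that] t(1) by auto
        ultimately show ?thesis by force
      qed
      obtain w where "w \<in> S" "limsup (\<lambda>N. ereal ((\<Sum>j=1..N. occ_block K w x j) / real N)) \<ge> ereal (1 / real K)"
        using density_pigeon[where f="\<lambda>w j. occ_block K w x j", OF fin cS occ_block_nn hit] by blast
      then show ?thesis unfolding S_def upper_density_def by auto
    qed
    show "\<exists>w\<in>lang_n X n. r_special (lang X) w \<and> upper_density K w x \<ge> ereal (1 / real K)"
    proof -
      define S where "S = {w \<in> lang_n X n. r_special (lang X) w}"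
      have fin: "finite S" unfolding S_def using lang_n_finite[OF ss] by simp
      have cS: "card S \<le> K" using rspecial_count[OF ss p(1)] grow[OF p(2)] unfolding S_def complexity_def
        by simp
      have hit: "\<exists>w\<in>S. occ_block K w x j \<ge> 1" if "j \<ge> 1" for j
      proof -
        have "\<exists>t\<in>{(j-1)*?L..<(j-1)*?L + ?L}. r_special (lang X) (factor x t n)"
          using right_window[OF assms(1,2) x p(1) crd, of "(j-1)*?L"] by blast
        then obtain t where t: "t \<in> {(j-1)*?L..<(j-1)*?L + ?L}" "r_special (lang X) (factor x t n)" by blast
        have "factor x t n \<in> S" unfolding S_def using t(2) factor_in_lang_n[OF x p(1)] by simp
        moreover have "occ_block K (factor x t n) x j = 1" using occ_block_hit[OF that] t(1) by auto
        ultimately show ?thesis by force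
      qed
      obtain w where "w \<in> S" "limsup (\<lambda>N. ereal ((\<Sum>j=1..N. occ_block K w x j) / real N)) \<ge> ereal (1 / real K)"
        using density_pigeon[where f="\<lambda>w j. occ_block K w x j", OF fin cS occ_block_nn hit] by blast
      then show ?thesis unfolding S_def upper_density_def by auto
    qed
  qed
  then show ?thesis by blast
qed

end
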